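(* For every $n\in\mathbb N$, the normal PO-dilators $\mathbb{T}_n$ and $\mathbb{T}_{n+1}^-$ are normal WPO-dilators, i.e. $\mathbb{T}_n(X)$ and $\mathbb{T}_{n+1}^-(X)$ are well partial orders whenever $X$ is a well partial order.
   Context: A well partial order is a partial order in which every infinite sequence $x_0,x_1,\dots$ has indices $i<j$ with $x_i\leq x_j$. For a partial order $X$, $M(X)$ is the set of finite multisets $[x_0,\dots,x_{m-1}]$ with elements from $X$, ordered by $[x_0,\dots,x_{m-1}]\leq_{M(X)}[y_0,\dots,y_{k-1}]$ iff there is an injection $g$ with $x_i\leq_X y_{g(i)}$ for all $i<m$. For $n\in\mathbb N$ and a partial order $X$, $\mathbb{T}_n(X)$ is generated by: $\overline x$ for each $x\in X$; $i\star\sigma$ for each $\sigma=[t_0,\dots,t_{m-1}]\in M(\mathbb{T}_n(X))$ and $i<n$. For $n>0$, $\mathbb{T}_n^-(X)=\{\overline x\mid x\in X\}\cup\{0\star\sigma\mid\sigma\in M(\mathbb{T}_n(X))\}$. The partial order $\leq_{\mathbb{T}_n(X)}$ is defined recursively: $\overline x\leq t$ iff either $t=\overline y$ with $x\leq_X y$, or $t=j\star[t_0,\dots,t_{m-1}]$ and $\overline x\leq t_l$ for some $l<m$; $i\star\sigma\leq t$ iff either $t=i\star\tau$ with $\sigma\leq_{M(\mathbb{T}_n(X))}\tau$, or $t=j\star[t_0,\dots,t_{m-1}]$ with $j\geq i$ and $i\star\sigma\leq t_l$ for some $l<m$; $\mathbb{T}_n^-(X)$ carries the restricted order. (On quasi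 embeddings $f$, $\mathbb{T}_n(f)$ relabels leaves $\overline x\mapsto\overline{f(x)}$; supports are $\operatorname{supp}^{\mathbb{T}_n}_X(\overline x)=\{x\}$, $\operatorname{supp}^{\mathbb{T}_n}_X(i\star[t_0,\dots,t_{m-1}])=\bigcup_l\operatorname{supp}^{\mathbb{T}_n}_X(t_l)$; with these, $\mathbb{T}_n$ and $\mathbb{T}_{n+1}^-$ are normal PO-dilators. A WPO-dilator is a PO-dilator $W$ such that $W(X)$ is a well partial order whenever $X$ is.) *)

theory Defs
  imports Main "HOL-Library.Multiset"
begin

definition po_on :: "'a set \<Rightarrow> ('a \<Rightarrow> 'a \<Rightarrow> bool) \<Rightarrow> bool" where
  "po_on A le \<longleftrightarrow>
     (\<forall>x\<in>A. le x x) \<and>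
     (\<forall>x\<in>A. \<forall>y\<in>A. le x y \<and> le y x \<longrightarrow> x = y) \<and>
     (\<forall>x\<in>A. \<forall>y\<in>A. \<forall>z\<in>A. le x y \<and> le y z \<longrightarrow> le x z)"

definition wpo_on :: "'a set \<Rightarrow> ('a \<Rightarrow> 'a \<Rightarrow> bool) \<Rightarrow> bool" where
  "wpo_on A le \<longleftrightarrow> po_on A le \<and>
     (\<forall>f :: nat \<Rightarrow> 'a. (\<forall>k. f k \<in> A) \<longrightarrow> (\<exists>i j. i < j \<and> le (f i) (f j)))"

definition mle :: "('a \<Rightarrow> 'a \<Rightarrow> bool) \<Rightarrow> 'a multiset \<Rightarrow> 'a multiset \<Rightarrow> bool" where
  "mle le \<sigma> \<tau> \<longleftrightarrow> (\<exists>xs ys g. mset xs = \<sigma> \<and> mset ys = \<tau> \<and>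
      inj_on g {..<length xs} \<and> g ` {..<length xs} \<subseteq> {..<length ys} \<and>
      (\<forall>i<length xs. le (xs ! i) (ys ! g i)))"

lemma mle_mono [mono]:
  "(\<And>x y. P x y \<longrightarrow> Q x y) \<Longrightarrow> mle P \<sigma> \<tau> \<longrightarrow> mle Q \<sigma> \<tau>"
proof
  assume PQ: "\<And>x y. P x y \<longrightarrow> Q x y" and "mle P \<sigma> \<tau>"
  then obtain xs ys g where h: "mset xs = \<sigma>" "mset ys = \<tau>"
      "inj_on g {..<length xs}" "g ` {..<length xs} \<subseteq> {..<length ys}"
      "\<forall>i<length xs. P (xs ! i) (ys ! g i)"
    unfolding mle_def by blast
  show "mle Q \<sigma> \<tau>"
    unfolding mle_def
    by (rule exI[of _ xs], rule exI[of _ ys], rule exI[of _ g]) (use h PQ in auto)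
qed

text \<open>Terms: Leaf x is the term bar x; Node i sigma is the term i \<star> sigma.\<close>

datatype 'a tterm = Leaf 'a | Node nat "'a tterm multiset"

inductive in_T :: "nat \<Rightarrow> 'a set \<Rightarrow> 'a tterm \<Rightarrow> bool" for n A where
  leaf: "x \<in> A \<Longrightarrow> in_T n A (Leaf x)"
| node: "i < n \<Longrightarrow> (\<forall>t. t \<in># \<sigma> \<longrightarrow> in_T n A t) \<Longrightarrow> in_T n A (Node i \<sigma>)"

definition T :: "nat \<Rightarrow> 'a set \<Rightarrow> 'a tterm set" where
  "T n A = {t. in_T n A t}"

definition Tminus :: "nat \<Rightarrow> 'a set \<Rightarrow> 'a tterm set" where
  "Tminus n A = {t \<in> T n A. (\<exists>x. t = Leaf x) \<or> (\<exists>\<sigma>. t = Node 0 \<sigma>)}"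

inductive tle :: "('a \<Rightarrow> 'a \<Rightarrow> bool) \<Rightarrow> 'a tterm \<Rightarrow> 'a tterm \<Rightarrow> bool" for le where
  leaf_leaf: "le x y \<Longrightarrow> tle le (Leaf x) (Leaf y)"
| leaf_node: "t \<in># ts \<Longrightarrow> tle le (Leaf x) t \<Longrightarrow> tle le (Leaf x) (Node j ts)"
| node_node: "mle (tle le) \<sigma> \<tau> \<Longrightarrow> tle le (Node i \<sigma>) (Node i \<tau>)"
| node_up: "i \<le> j \<Longrightarrow> t \<in># ts \<Longrightarrow> tle le (Node i \<sigma>) t \<Longrightarrow> tle le (Node i \<sigma>) (Node j ts)"

end

theory Submission
  imports Defs "HOL-Library.Ramsey"
begin

definition wgood :: "'b set \<Rightarrow> ('b \<Rightarrow> 'b \<Rightarrow> bool) \<Rightarrow> bool" where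
  "wgood S r \<longleftrightarrow> (\<forall>f :: nat \<Rightarrow> 'b. (\<forall>i. f i \<in> S) \<longrightarrow> (\<exists>i j. i < j \<and> r (f i) (f j)))"

definition bad_seq :: "'b set \<Rightarrow> ('b \<Rightarrow> 'b \<Rightarrow> bool) \<Rightarrow> (nat \<Rightarrow> 'b) \<Rightarrow> bool" where
  "bad_seq S r f \<longleftrightarrow> (\<forall>i. f i \<in> S) \<and> (\<forall>i j. i < j \<longrightarrow> \<not> r (f i) (f j))"

lemma good_subset:
  assumes "wgood S r" "S2 \<subseteq> S" shows "wgood S2 r"
  unfolding wgood_def
proof (intro allI impI)
  fix f :: "nat \<Rightarrow> _" assume "\<forall>i. f i \<in> S2"
  then have "\<forall>i. f i \<in> S" using assms(2) by auto
  then show "\<exists>i j. i < j \<and> r (f i) (f j)" using assms(1) unfolding wgood_def by simp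
qed

lemma wgoodD: "wgood S r \<Longrightarrow> (\<And>i. f i \<in> S) \<Longrightarrow> \<exists>i j. i < j \<and> r (f i) (f (j::nat))"
  unfolding wgood_def by blast

lemma not_good: "\<not> wgood S r \<Longrightarrow> \<exists>f. bad_seq S r f"
  unfolding wgood_def bad_seq_def by simp

lemma good_union:
  assumes A: "wgood A r" and B: "wgood B r"
  shows "wgood (A \<union> B) r"
  unfolding wgood_def
proof (intro allI impI)
  fix f :: "nat \<Rightarrow> _" assume f: "\<forall>i. f i \<in> A \<union> B"
  show "\<exists>i j. i < j \<and> r (f i) (f j)"
  proof (cases "infinite {i. f i \<in> A}")
    case True
    let ?e = "enumerate {i. f i \<in> A}"
    have "\<forall>i. f (?e i) \<in> A" using enumerate_in_set[OF True] by auto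
    then obtain i j where "i < j" "r (f (?e i)) (f (?e j))" using wgoodD[OF A, of "\<lambda>i. f (?e i)"] by blast
    moreover have "?e i < ?e j" using strict_mono_enumerate[OF True] \<open>i < j\<close> by (simp add: strict_mono_def)
    ultimately show ?thesis by blast
  next
    case False
    then obtain N where N: "\<forall>i\<in>{i. f i \<in> A}. i < N"
      using finite_nat_set_iff_bounded by blast
    have "f (i + N) \<in> B" for i
    proof -
      have "f (i + N) \<notin> A" using N by force
      then show ?thesis using f by blast
    qed
    then obtain i j where ij: "i < j" "r (f (i + N)) (f (j + N))" using wgoodD[OF B, of "\<lambda>i. f (i + N)"] by blast
    show ?thesis by (rule exI[of _ "i + N"], rule exI[of _ "j + N"]) (use ij in simp)
  qed
qed

lemma good_chain:
  fixes f :: "nat \<Rightarrow> 'b"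
  assumes A: "wgood A r" and f: "\<forall>i. f i \<in> A"
  shows "\<exists>\<psi> :: nat \<Rightarrow> nat. strict_mono \<psi> \<and> (\<forall>i j. i < j \<longrightarrow> r (f (\<psi> i)) (f (\<psi> j)))"
proof -
  define col where "col X = (if r (f (Min X)) (f (Max X)) then 0 else (1::nat))" for X :: "nat set"
  have c2: "col X < 2" for X unfolding col_def by simp
  have "\<forall>x\<in>(UNIV::nat set). \<forall>y\<in>UNIV. x \<noteq> y \<longrightarrow> col {x, y} < 2" using c2 by simp
  from Ramsey2[OF infinite_UNIV_nat this] obtain Y t where
    Y: "infinite Y" "t < 2" "\<forall>x\<in>Y. \<forall>y\<in>Y. x \<noteq> y \<longrightarrow> col {x, y} = t"
    by (elim exE conjE) (rule that)
  define \<psi> where "\<psi> = enumerate Y"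
  have sm: "strict_mono \<psi>" unfolding \<psi>_def using strict_mono_enumerate[OF Y(1)] .
  have inY: "\<psi> i \<in> Y" for i unfolding \<psi>_def using enumerate_in_set[OF Y(1)] .
  have colij: "col {\<psi> i, \<psi> j} = t" if "i < j" for i j
  proof -
    have "\<psi> i < \<psi> j" using sm that by (simp add: strict_mono_less)
    then show ?thesis using Y(3)[rule_format, OF inY[of i] inY[of j]] by simp
  qed
  have eq: "col {\<psi> i, \<psi> j} = (if r (f (\<psi> i)) (f (\<psi> j)) then 0 else 1)" if "i < j" for i j
  proof -
    have "\<psi> i < \<psi> j" using sm that by (simp add: strict_mono_less)
    then have "Min {\<psi> i, \<psi> j} = \<psi> i" "Max {\<psi> i, \<psi> j} = \<psi> j" by auto
    then show ?thesis unfolding col_def by simp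
  qed
  have "t = 0"
  proof (rule ccontr)
    assume "t \<noteq> 0"
    have "f (\<psi> i) \<in> A" for i using f by simp
    from wgoodD[OF A, where f="\<lambda>i. f (\<psi> i)", OF this] obtain i j
      where ij: "i < j" "r (f (\<psi> i)) (f (\<psi> j))" by (elim exE conjE)
    have "col {\<psi> i, \<psi> j} = 0" using eq[OF ij(1)] ij(2) by simp
    moreover have "col {\<psi> i, \<psi> j} = t" using colij[OF ij(1)] .
    ultimately show False using \<open>t \<noteq> 0\<close> by simp
  qed
  have ch: "\<forall>i j. i < j \<longrightarrow> r (f (\<psi> i)) (f (\<psi> j))"
  proof (intro allI impI)
    fix i j :: nat assume "i < j"
    from colij[OF this] eq[OF this] \<open>t = 0\<close> show "r (f (\<psi> i)) (f (\<psi> j))"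
      by (simp split: if_splits)
  qed
  show ?thesis by (rule exI[of _ \<psi>]) (use sm ch in simp)
qed

fun mb_pre :: "((nat \<Rightarrow> 'b) \<Rightarrow> bool) \<Rightarrow> ('b \<Rightarrow> nat) \<Rightarrow> nat \<Rightarrow> 'b list" where
  "mb_pre B sz 0 = []"
| "mb_pre B sz (Suc i) = mb_pre B sz i @ [SOME x.
      (\<exists>g. B g \<and> (\<forall>j<i. g j = mb_pre B sz i ! j) \<and> g i = x) \<and>
      (\<forall>g. B g \<and> (\<forall>j<i. g j = mb_pre B sz i ! j) \<longrightarrow> sz x \<le> sz (g i))]"

lemma mb_pre_length: "length (mb_pre B sz i) = i"
  by (induction i) auto

lemma mb_pre_prefix: "i \<le> k \<Longrightarrow> j < i \<Longrightarrow> mb_pre B sz k ! j = mb_pre B sz i ! j"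
proof (induction k)
  case 0 then show ?case by simp
next
  case (Suc k)
  show ?case
  proof (cases "i = Suc k")
    case False
    then have "i \<le> k" using Suc by simp
    then show ?thesis using Suc by (simp add: nth_append mb_pre_length)
  qed simp
qed

definition mbQ :: "((nat \<Rightarrow> 'b) \<Rightarrow> bool) \<Rightarrow> ('b \<Rightarrow> nat) \<Rightarrow> nat \<Rightarrow> 'b \<Rightarrow> bool" where
  "mbQ B sz i x \<longleftrightarrow> (\<exists>g. B g \<and> (\<forall>j<i. g j = mb_pre B sz i ! j) \<and> g i = x) \<and>
      (\<forall>g. B g \<and> (\<forall>j<i. g j = mb_pre B sz i ! j) \<longrightarrow> sz x \<le> sz (g i))"

lemma mb_pre_Suc: "mb_pre B sz (Suc i) = mb_pre B sz i @ [SOME x. mbQ B sz i x]"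
  unfolding mbQ_def by simp

declare mb_pre.simps(2)[simp del]

lemma mb_ext:
  assumes "\<exists>g. B g"
  shows "(\<exists>g. B g \<and> (\<forall>j<i. g j = mb_pre B sz i ! j)) \<and> (i > 0 \<longrightarrow> mbQ B sz (i - 1) (mb_pre B sz i ! (i - 1)))"
proof (induction i)
  case 0 then show ?case using assms by simp
next
  case (Suc i)
  let ?P = "\<lambda>g. B g \<and> (\<forall>j<i. g j = mb_pre B sz i ! j)"
  from Suc have "\<exists>g. ?P g" by blast
  then obtain g0 where g0: "?P g0" "\<And>g. ?P g \<Longrightarrow> sz (g0 i) \<le> sz (g i)"
    using ex_has_least_nat[of ?P _ "\<lambda>g. sz (g i)"] by blast
  have "mbQ B sz i (g0 i)" unfolding mbQ_def using g0 by blast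
  then have Q: "mbQ B sz i (SOME x. mbQ B sz i x)" by (rule someI)
  then obtain g where g: "?P g" "g i = (SOME x. mbQ B sz i x)" unfolding mbQ_def by blast
  have "\<forall>j<Suc i. g j = mb_pre B sz (Suc i) ! j"
    using g by (auto simp: mb_pre_Suc nth_append mb_pre_length less_Suc_eq)
  moreover have "mb_pre B sz (Suc i) ! i = (SOME x. mbQ B sz i x)"
    by (simp add: mb_pre_Suc nth_append mb_pre_length)
  ultimately show ?case using g Q by auto
qed

lemma minimal_bad:
  assumes ng: "\<not> wgood S r"
  and sub_sz: "\<And>x y. sub x y \<Longrightarrow> (sz :: 'b \<Rightarrow> nat) x < sz y"
  and sub_r: "\<And>w x y. w \<in> S \<Longrightarrow> x \<in> S \<Longrightarrow> y \<in> S \<Longrightarrow> sub x y \<Longrightarrow> r w x \<Longrightarrow> r w y"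
  shows "\<exists>m. bad_seq S r m \<and> wgood {x\<in>S. \<exists>i. sub x (m i)} r"
proof -
  let ?B = "bad_seq S r"
  have ex: "\<exists>g. ?B g" using not_good[OF ng] .
  define m where "m i = mb_pre ?B sz (Suc i) ! i" for i
  have m_pre: "mb_pre ?B sz k ! j = m j" if "j < k" for j k
    unfolding m_def using mb_pre_prefix[of "Suc j" k j] that by simp
  have ext: "\<exists>g. ?B g \<and> (\<forall>j<k. g j = m j)" for k
    using mb_ext[OF ex, of k sz] m_pre by auto
  have minim: "sz (m i) \<le> sz (g i)" if "?B g" "\<forall>j<i. g j = m j" for g i
  proof -
    have "mbQ ?B sz i (m i)" using mb_ext[OF ex, of "Suc i" sz] unfolding m_def by simp
    then show ?thesis unfolding mbQ_def using that m_pre by auto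
  qed
  have badm: "?B m"
    unfolding bad_seq_def
  proof (intro conjI allI impI)
    fix i
    obtain g where "?B g" "\<forall>j<Suc i. g j = m j" using ext by blast
    then show "m i \<in> S" unfolding bad_seq_def by (metis lessI)
  next
    fix i j :: nat assume "i < j"
    obtain g where "?B g" "\<forall>l<Suc j. g l = m l" using ext by blast
    then show "\<not> r (m i) (m j)" unfolding bad_seq_def using \<open>i < j\<close> by (metis less_Suc_eq)
  qed
  have "wgood {x\<in>S. \<exists>i. sub x (m i)} r"
  proof (rule ccontr)
    assume "\<not> wgood {x\<in>S. \<exists>i. sub x (m i)} r"
    then obtain h where h: "bad_seq {x\<in>S. \<exists>i. sub x (m i)} r h" using not_good by blast
    define \<phi> where "\<phi> l = (SOME i. sub (h l) (m i))" for l
    have hphi: "sub (h l) (m (\<phi> l))" for l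
      using h unfolding bad_seq_def \<phi>_def by (metis (mono_tags, lifting) mem_Collect_eq someI)
    have hS: "h l \<in> S" for l using h unfolding bad_seq_def by blast
    obtain l0 where l0: "\<And>l. \<phi> l0 \<le> \<phi> l"
      using ex_has_least_nat[of "\<lambda>_. True" 0 \<phi>] by blast
    define p where "p = \<phi> l0"
    define g where "g j = (if j < p then m j else h (l0 + (j - p)))" for j
    have mS: "m i \<in> S" for i using badm unfolding bad_seq_def by blast
    have "?B g"
      unfolding bad_seq_def
    proof (intro conjI allI impI)
      fix i show "g i \<in> S" unfolding g_def using mS hS by simp
    next
      fix i j :: nat assume ij: "i < j"
      show "\<not> r (g i) (g j)"
      proof (cases "j < p")
        case True
        then show ?thesis using ij badm unfolding g_def bad_seq_def by simp
      next
        case jp: False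
        show ?thesis
        proof (cases "i < p")
          case True
          show ?thesis
          proof
            assume "r (g i) (g j)"
            then have "r (m i) (h (l0 + (j - p)))" using True jp unfolding g_def by simp
            then have "r (m i) (m (\<phi> (l0 + (j - p))))"
              using sub_r[OF mS hS mS hphi] by blast
            moreover have "i < \<phi> (l0 + (j - p))" using True l0 unfolding p_def
              by (meson less_le_trans)
            ultimately show False using badm unfolding bad_seq_def by blast
          qed
        next
          case False
          then show ?thesis using ij jp h unfolding g_def bad_seq_def by simp
        qed
      qed
    qed
    moreover have "\<forall>j<p. g j = m j" unfolding g_def by simp
    ultimately have "sz (m p) \<le> sz (g p)" by (rule minim)
    moreover have "g p = h l0" unfolding g_def by simp
    ultimately show False using sub_sz[OF hphi[of l0]] unfolding p_def by simp
  qed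
  then show ?thesis using badm by blast
qed

lemma mset_distinct_sub:
  assumes "distinct xs" "distinct ys" "set xs \<subseteq> set ys"
  shows "mset xs \<subseteq># mset ys"
proof -
  have "mset xs = mset_set (set xs)" using assms(1) by (simp add: mset_set_set)
  moreover have "mset ys = mset_set (set ys)" using assms(2) by (simp add: mset_set_set)
  ultimately show ?thesis using assms(3) by (simp add: subset_imp_msubset_mset_set)
qed

lemma mle_iff: "mle r \<sigma> \<tau> \<longleftrightarrow> (\<exists>\<tau>'. \<tau>' \<subseteq># \<tau> \<and> rel_mset r \<sigma> \<tau>')"
proof
  assume "mle r \<sigma> \<tau>"
  then obtain xs ys g where h: "mset xs = \<sigma>" "mset ys = \<tau>"
      "inj_on g {..<length xs}" "g ` {..<length xs} \<subseteq> {..<length ys}"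
      "\<forall>i<length xs. r (xs ! i) (ys ! g i)"
    unfolding mle_def by blast
  define zs where "zs = map (\<lambda>i. ys ! g i) [0..<length xs]"
  have "list_all2 r xs zs" unfolding zs_def using h(5) by (simp add: list_all2_conv_all_nth)
  then have rel: "rel_mset r \<sigma> (mset zs)" unfolding rel_mset_def using h(1) by blast
  have d1: "distinct (map g [0..<length xs])"
    using h(3) by (simp add: distinct_map lessThan_atLeast0)
  have d2: "distinct [0..<length ys]" by simp
  have s: "set (map g [0..<length xs]) \<subseteq> set [0..<length ys]"
    using h(4) by (auto simp: lessThan_atLeast0)
  have "mset (map g [0..<length xs]) \<subseteq># mset [0..<length ys]"
    by (rule mset_distinct_sub[OF d1 d2 s])
  then have "image_mset (nth ys) (mset (map g [0..<length xs])) \<subseteq># image_mset (nth ys) (mset [0..<length ys])"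
    by (rule image_mset_subseteq_mono)
  moreover have "image_mset (nth ys) (mset [0..<length ys]) = mset ys"
    by (metis map_nth mset_map)
  moreover have "image_mset (nth ys) (mset (map g [0..<length xs])) = mset zs"
    unfolding zs_def by (simp add: multiset.map_comp o_def)
  ultimately have "mset zs \<subseteq># \<tau>" using h(2) by simp
  then show "\<exists>\<tau>'. \<tau>' \<subseteq># \<tau> \<and> rel_mset r \<sigma> \<tau>'" using rel by blast
next
  assume "\<exists>\<tau>'. \<tau>' \<subseteq># \<tau> \<and> rel_mset r \<sigma> \<tau>'"
  then obtain \<tau>' where t: "\<tau>' \<subseteq># \<tau>" "rel_mset r \<sigma> \<tau>'" by blast
  then obtain xs ys' where x: "mset xs = \<sigma>" "mset ys' = \<tau>'" "list_all2 r xs ys'"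
    unfolding rel_mset_def by blast
  obtain \<rho> where "\<tau> = \<tau>' + \<rho>" using t(1) by (metis subset_mset.le_iff_add)
  obtain zs where "mset zs = \<rho>" using ex_mset by blast
  define ys where "ys = ys' @ zs"
  have "mset ys = \<tau>" unfolding ys_def using \<open>\<tau> = \<tau>' + \<rho>\<close> x(2) \<open>mset zs = \<rho>\<close> by simp
  moreover have "inj_on id {..<length xs}" by simp
  moreover have "id ` {..<length xs} \<subseteq> {..<length ys}"
    using x(3) unfolding ys_def by (auto simp: list_all2_lengthD)
  moreover have "\<forall>i<length xs. r (xs ! i) (ys ! id i)"
    using x(3) unfolding ys_def by (auto simp: list_all2_conv_all_nth nth_append)
  ultimately show "mle r \<sigma> \<tau>" unfolding mle_def using x(1) by blast
qed

lemma mle_empty: "mle r {#} \<tau>"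
  unfolding mle_iff by (rule exI[of _ "{#}"]) simp

lemma mle_sub: "mle r \<sigma> \<tau> \<Longrightarrow> \<tau> \<subseteq># \<tau>2 \<Longrightarrow> mle r \<sigma> \<tau>2"
  unfolding mle_iff by (meson subset_mset.order_trans)

lemma mle_add: "r a b \<Longrightarrow> mle r \<sigma> \<tau> \<Longrightarrow> mle r (add_mset a \<sigma>) (add_mset b \<tau>)"
  unfolding mle_iff by (metis mset_subset_eq_add_mset_cancel rel_mset_Plus)

lemma rel_mset_refl: "(\<And>x. x \<in># \<sigma> \<Longrightarrow> r x x) \<Longrightarrow> rel_mset r \<sigma> \<sigma>"
proof (induction \<sigma>)
  case empty then show ?case by (simp add: rel_mset_Zero)
next
  case (add x \<sigma>) then show ?case by (simp add: rel_mset_Plus)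
qed

lemma mle_refl: "(\<And>x. x \<in># \<sigma> \<Longrightarrow> r x x) \<Longrightarrow> mle r \<sigma> \<sigma>"
  unfolding mle_iff using rel_mset_refl by blast

lemma mle_elem: "mle r \<sigma> \<tau> \<Longrightarrow> x \<in># \<sigma> \<Longrightarrow> \<exists>y. y \<in># \<tau> \<and> r x y"
proof -
  assume "mle r \<sigma> \<tau>" "x \<in># \<sigma>"
  then obtain \<tau>' where t: "\<tau>' \<subseteq># \<tau>" "rel_mset r \<sigma> \<tau>'" unfolding mle_iff by blast
  obtain \<sigma>' where "\<sigma> = add_mset x \<sigma>'" using \<open>x \<in># \<sigma>\<close> by (metis multi_member_split)
  then obtain y N1 where "\<tau>' = add_mset y N1" "r x y" using msed_rel_invL t(2) by metis
  then show ?thesis using t(1) by (metis mset_subset_eqD union_single_eq_member)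
qed

lemma rel_mset_sub:
  "rel_mset Q \<sigma> \<tau> \<Longrightarrow> \<sigma>1 \<subseteq># \<sigma> \<Longrightarrow> \<exists>\<tau>2. \<tau>2 \<subseteq># \<tau> \<and> rel_mset Q \<sigma>1 \<tau>2"
proof (induction \<sigma>1 arbitrary: \<sigma> \<tau>)
  case empty then show ?case by (intro exI[of _ "{#}"]) (simp add: rel_mset_Zero)
next
  case (add x \<sigma>1)
  then have "x \<in># \<sigma>" by (meson insert_subset_eq_iff)
  then obtain \<sigma>' where s: "\<sigma> = add_mset x \<sigma>'" by (metis multi_member_split)
  with add.prems have s1: "\<sigma>1 \<subseteq># \<sigma>'" by simp
  obtain \<tau>1 y where t: "\<tau> = add_mset y \<tau>1" "Q x y" "rel_mset Q \<sigma>' \<tau>1"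
    using msed_rel_invL add.prems(1) s by metis
  obtain \<tau>2 where "\<tau>2 \<subseteq># \<tau>1" "rel_mset Q \<sigma>1 \<tau>2" using add.IH[OF t(3) s1] by blast
  then show ?case using t by (intro exI[of _ "add_mset y \<tau>2"]) (simp add: rel_mset_Plus)
qed

lemma mle_trans:
  assumes "mle P \<rho> \<sigma>" "mle Q \<sigma> \<tau>"
  and "\<And>x y z. x \<in># \<rho> \<Longrightarrow> y \<in># \<sigma> \<Longrightarrow> z \<in># \<tau> \<Longrightarrow> P x y \<Longrightarrow> Q y z \<Longrightarrow> R x z"
  shows "mle R \<rho> \<tau>"
proof -
  obtain \<sigma>1 where s1: "\<sigma>1 \<subseteq># \<sigma>" "rel_mset P \<rho> \<sigma>1" using assms(1) unfolding mle_iff by blast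
  obtain \<tau>1 where t1: "\<tau>1 \<subseteq># \<tau>" "rel_mset Q \<sigma> \<tau>1" using assms(2) unfolding mle_iff by blast
  obtain \<tau>2 where t2: "\<tau>2 \<subseteq># \<tau>1" "rel_mset Q \<sigma>1 \<tau>2" using rel_mset_sub[OF t1(2) s1(1)] by blast
  have "rel_mset (\<lambda>a b. P a b \<and> b \<in># \<sigma>1) \<rho> \<sigma>1"
    using s1(2) by (rule multiset.rel_mono_strong) simp
  then have "(rel_mset (\<lambda>a b. P a b \<and> b \<in># \<sigma>1) OO rel_mset Q) \<rho> \<tau>2" using t2(2) by blast
  then have r: "rel_mset ((\<lambda>a b. P a b \<and> b \<in># \<sigma>1) OO Q) \<rho> \<tau>2" by (simp add: multiset.rel_compp)
  have sub: "\<tau>2 \<subseteq># \<tau>" using t2(1) t1(1) by (meson subset_mset.order_trans)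
  have s1s: "\<sigma>1 \<subseteq># \<sigma>" by (fact s1(1))
  have "rel_mset R \<rho> \<tau>2"
    using r
  proof (rule multiset.rel_mono_strong)
    fix a c assume a: "a \<in> set_mset \<rho>" and c: "c \<in> set_mset \<tau>2"
      and "((\<lambda>a b. P a b \<and> b \<in># \<sigma>1) OO Q) a c"
    then obtain b where "P a b" "b \<in># \<sigma>1" "Q b c" by blast
    moreover have "b \<in># \<sigma>" using \<open>b \<in># \<sigma>1\<close> s1s by (meson mset_subset_eqD)
    moreover have "c \<in># \<tau>" using c sub by (meson mset_subset_eqD)
    ultimately show "R a c" using assms(3) a by blast
  qed
  then show ?thesis unfolding mle_iff using sub by blast
qed

lemma finite_maximal:
  assumes "finite F" "F \<noteq> {}" "F \<subseteq> X"
  and tr: "\<And>x y z. x \<in> X \<Longrightarrow> y \<in> X \<Longrightarrow> z \<in> X \<Longrightarrow> r x y \<Longrightarrow> r y z \<Longrightarrow> r x z"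
  and an: "\<And>x y. x \<in> X \<Longrightarrow> y \<in> X \<Longrightarrow> r x y \<Longrightarrow> r y x \<Longrightarrow> x = y"
  shows "\<exists>x\<in>F. \<forall>z\<in>F. r x z \<longrightarrow> z = x"
  using assms(1,2,3)
proof (induction F rule: finite_ne_induct)
  case (singleton x) then show ?case by simp
next
  case (insert a F)
  then obtain x where x: "x \<in> F" "\<forall>z\<in>F. r x z \<longrightarrow> z = x" by auto
  have aX: "a \<in> X" and FX: "F \<subseteq> X" using insert.prems by auto
  show ?case
  proof (cases "r x a")
    case True
    have "\<forall>z\<in>insert a F. r a z \<longrightarrow> z = a"
    proof (intro ballI impI)
      fix z assume z: "z \<in> insert a F" "r a z"
      show "z = a"
      proof (cases "z = a")
        case False
        then have zF: "z \<in> F" using z by simp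
        have "r x z" using tr[OF _ aX, of x z] True z(2) x(1) zF FX by blast
        then have "z = x" using x zF by blast
        then show ?thesis using an[OF aX, of x] True z(2) x(1) FX by blast
      qed
    qed
    then show ?thesis by blast
  next
    case False
    then show ?thesis using x by blast
  qed
qed

lemma rel_mset_antisym:
  assumes "rel_mset r \<sigma> \<tau>" "rel_mset r \<tau> \<sigma>"
  and tr: "\<And>x y z. x \<in> X \<Longrightarrow> y \<in> X \<Longrightarrow> z \<in> X \<Longrightarrow> r x y \<Longrightarrow> r y z \<Longrightarrow> r x z"
  and an: "\<And>x y. x \<in> X \<Longrightarrow> y \<in> X \<Longrightarrow> r x y \<Longrightarrow> r y x \<Longrightarrow> x = y"
  and "set_mset \<sigma> \<subseteq> X" "set_mset \<tau> \<subseteq> X"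
  shows "\<sigma> = \<tau>"
  using assms(1,2,5,6)
proof (induction "size \<sigma>" arbitrary: \<sigma> \<tau>)
  case 0 then show ?case by (metis rel_mset_Zero_iff(1) size_eq_0_iff_empty)
next
  case (Suc n)
  then have "\<sigma> \<noteq> {#}" by auto
  have "\<exists>x\<in>set_mset \<sigma>. \<forall>z\<in>set_mset \<sigma>. r x z \<longrightarrow> z = x"
    apply (rule finite_maximal[of "set_mset \<sigma>" X r])
        apply simp
       apply (simp add: \<open>\<sigma> \<noteq> {#}\<close>)
      apply (rule Suc.prems(3))
     apply (rule tr; assumption)
    apply (rule an; assumption)
    done
  then obtain x where x: "x \<in># \<sigma>" "\<forall>z\<in>set_mset \<sigma>. r x z \<longrightarrow> z = x" by blast
  obtain \<sigma>' where s: "\<sigma> = add_mset x \<sigma>'" using x(1) by (metis multi_member_split)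
  obtain \<tau>' y where t: "\<tau> = add_mset y \<tau>'" "r x y" "rel_mset r \<sigma>' \<tau>'"
    using msed_rel_invL Suc.prems(1) s by metis
  obtain \<sigma>'' x' where s2: "\<sigma> = add_mset x' \<sigma>''" "r y x'" "rel_mset r \<tau>' \<sigma>''"
    using msed_rel_invL Suc.prems(2) t(1) by metis
  have "x' \<in># \<sigma>" using s2(1) by simp
  then have xX: "x \<in> X" "y \<in> X" "x' \<in> X" using Suc.prems(3,4) s t(1) by auto
  have "r x x'" using tr[OF xX(1) xX(2) xX(3)] t(2) s2(2) by blast
  then have "x' = x" using x(2) s2(1) by simp
  then have "y = x" using an[OF xX(1) xX(2)] t(2) s2(2) by simp
  have "\<sigma>'' = \<sigma>'" using s s2(1) \<open>x' = x\<close> by simp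
  have "\<sigma>' = \<tau>'"
    using Suc.hyps(1)[of \<sigma>' \<tau>'] Suc.hyps(2) s t(3) s2(3) \<open>\<sigma>'' = \<sigma>'\<close> Suc.prems(3,4) t(1) by auto
  then show ?case using s t(1) \<open>y = x\<close> by simp
qed

lemma good_mset:
  assumes A: "wgood A r"
  shows "wgood {\<sigma>. set_mset \<sigma> \<subseteq> A} (mle r)"
proof (rule ccontr)
  let ?S = "{\<sigma>. set_mset \<sigma> \<subseteq> A}"
  assume "\<not> wgood ?S (mle r)"
  from minimal_bad[OF this, of "(\<subset>#)" size]
  obtain m where m: "bad_seq ?S (mle r) m" "wgood {x \<in> ?S. \<exists>i. x \<subset># m i} (mle r)"
    using mset_subset_size mle_sub subset_mset.less_imp_le by blast
  have ne: "m i \<noteq> {#}" for i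
  proof
    assume "m i = {#}"
    then have "mle r (m i) (m (Suc i))" by (simp add: mle_empty)
    then show False using m(1) unfolding bad_seq_def by auto
  qed
  define a where "a i = (SOME x. x \<in># m i)" for i
  define \<tau> where "\<tau> i = m i - {#a i#}" for i
  have ai: "a i \<in># m i" for i unfolding a_def using ne[of i]
    by (metis multiset_nonemptyE someI)
  have mi: "m i = add_mset (a i) (\<tau> i)" for i unfolding \<tau>_def using ai[of i] by simp
  have mS: "m i \<in> ?S" for i using m(1) unfolding bad_seq_def by blast
  have aA: "a i \<in> A" for i using ai mS by blast
  have tU: "\<tau> i \<in> {x \<in> ?S. \<exists>i. x \<subset># m i}" for i
  proof -
    have "\<tau> i \<subset># m i" using mi[of i] by (simp add: multi_psub_of_add_self)
    moreover have "\<tau> i \<in> ?S" using mS[of i] mi[of i] by auto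
    ultimately show ?thesis by blast
  qed
  obtain \<psi> :: "nat \<Rightarrow> nat" where psi: "strict_mono \<psi>" "\<forall>i j. i < j \<longrightarrow> r (a (\<psi> i)) (a (\<psi> j))"
    using good_chain[OF A, of a] aA by blast
  from wgoodD[OF m(2), where f="\<lambda>i. \<tau> (\<psi> i)", OF tU] obtain i j where
    ij: "i < j" "mle r (\<tau> (\<psi> i)) (\<tau> (\<psi> j))" by (elim exE conjE)
  have "mle r (m (\<psi> i)) (m (\<psi> j))" using mle_add[OF _ ij(2), of "a (\<psi> i)" "a (\<psi> j)"] psi(2) ij(1) mi by simp
  moreover have "\<psi> i < \<psi> j" using psi(1) ij(1) by (simp add: strict_mono_less)
  ultimately show False using m(1) unfolding bad_seq_def by blast
qed

inductive inB :: "nat \<Rightarrow> nat \<Rightarrow> 'a tterm set \<Rightarrow> 'a tterm \<Rightarrow> bool" for k m Y where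
  atom: "t \<in> Y \<Longrightarrow> inB k m Y t"
| node: "k \<le> i \<Longrightarrow> i < k + m \<Longrightarrow> (\<forall>c. c \<in># \<sigma> \<longrightarrow> inB k m Y c) \<Longrightarrow> inB k m Y (Node i \<sigma>)"

lemma inB_mono: "inB k m Y t \<Longrightarrow> Y \<subseteq> Y' \<Longrightarrow> inB k m Y' t"
  by (induction rule: inB.induct) (auto intro: inB.intros)

inductive below :: "nat \<Rightarrow> 'a tterm \<Rightarrow> 'a tterm \<Rightarrow> bool" for k where
  b1: "c \<in># \<sigma> \<Longrightarrow> k \<le> i \<Longrightarrow> below k c (Node i \<sigma>)"
| b2: "below k z c \<Longrightarrow> c \<in># \<sigma> \<Longrightarrow> k \<le> i \<Longrightarrow> below k z (Node i \<sigma>)"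

lemma child_size: "c \<in># \<sigma> \<Longrightarrow> size c < size (Node i \<sigma>)"
proof -
  assume "c \<in># \<sigma>"
  then obtain \<sigma>' where "\<sigma> = add_mset c \<sigma>'" by (metis multi_member_split)
  then show ?thesis by simp
qed

lemma below_size: "below k z t \<Longrightarrow> size z < size t"
proof (induction rule: below.induct)
  case (b1 c \<sigma> i) show ?case by (rule child_size[OF b1(1)])
next
  case (b2 z c \<sigma> i) then show ?case using child_size[OF b2(2), of i] by simp
qed

lemma below_tle: "below k z t \<Longrightarrow> tle le (Node k \<rho>) z \<Longrightarrow> tle le (Node k \<rho>) t"
  by (induction rule: below.induct) (auto intro: tle.node_up)

definition Sk :: "nat \<Rightarrow> nat \<Rightarrow> 'a tterm set \<Rightarrow> 'a tterm set" where
  "Sk k n Y = {t. \<exists>\<sigma>. t = Node k \<sigma> \<and> (\<forall>c. c \<in># \<sigma> \<longrightarrow> inB k (Suc n) Y c)}"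

lemma decomp: "inB k (Suc n) Y t \<Longrightarrow> inB (Suc k) n (Y \<union> {z \<in> Sk k n Y. z = t \<or> below k z t}) t"
proof (induction rule: inB.induct)
  case (atom t) then show ?case by (simp add: inB.atom)
next
  case (node i \<sigma>)
  show ?case
  proof (cases "i = k")
    case True
    then have "Node i \<sigma> \<in> Sk k n Y" unfolding Sk_def using node(3) by auto
    then show ?thesis by (intro inB.atom) simp
  next
    case False
    have "\<forall>c. c \<in># \<sigma> \<longrightarrow> inB (Suc k) n (Y \<union> {z \<in> Sk k n Y. z = Node i \<sigma> \<or> below k z (Node i \<sigma>)}) c"
    proof (intro allI impI)
      fix c assume c: "c \<in># \<sigma>"
      have h: "inB (Suc k) n (Y \<union> {z \<in> Sk k n Y. z = c \<or> below k z c}) c" using node(3) c by blast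
      have sub: "Y \<union> {z \<in> Sk k n Y. z = c \<or> below k z c} \<subseteq> Y \<union> {z \<in> Sk k n Y. z = Node i \<sigma> \<or> below k z (Node i \<sigma>)}"
        using c node(1) by (auto intro: below.intros)
      show "inB (Suc k) n (Y \<union> {z \<in> Sk k n Y. z = Node i \<sigma> \<or> below k z (Node i \<sigma>)}) c"
        by (rule inB_mono[OF h sub])
    qed
    moreover have "Suc k \<le> i" "i < Suc k + n" using False node(1,2) by auto
    ultimately show ?thesis by (intro inB.node) auto
  qed
qed

lemma main: "wgood Y (tle le) \<Longrightarrow> wgood {t. inB k n Y t} (tle le)"
proof (induction n arbitrary: k Y)
  case 0
  have "{t. inB k 0 Y t} \<subseteq> Y" by (auto elim: inB.cases)
  then show ?case by (rule good_subset[OF 0])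
next
  case (Suc n)
  let ?S = "Sk k n Y"
  have goodS: "wgood ?S (tle le)"
  proof (rule ccontr)
    assume ng: "\<not> wgood ?S (tle le)"
    have sub_r: "tle le w y" if H: "w \<in> ?S" "x \<in> ?S" "y \<in> ?S" "below k x y" "tle le w x" for w x y
    proof -
      obtain \<rho> where "w = Node k \<rho>" using H(1) unfolding Sk_def by blast
      then show ?thesis using below_tle[OF H(4)] H(5) by simp
    qed
    have "\<exists>m. bad_seq ?S (tle le) m \<and> wgood {x \<in> ?S. \<exists>i. below k x (m i)} (tle le)"
      apply (rule minimal_bad[where sub="below k" and sz=size])
        apply (rule ng)
       apply (erule below_size)
      apply (rule sub_r; assumption)
      done
    then obtain m where m: "bad_seq ?S (tle le) m" "wgood {x \<in> ?S. \<exists>i. below k x (m i)} (tle le)"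
      by (elim exE conjE)
    let ?U = "{x \<in> ?S. \<exists>i. below k x (m i)}"
    let ?Z = "Y \<union> ?U"
    have gZ: "wgood ?Z (tle le)" by (rule good_union[OF Suc.prems m(2)])
    have gB: "wgood {t. inB (Suc k) n ?Z t} (tle le)" by (rule Suc.IH[OF gZ])
    have gM: "wgood {\<sigma>. set_mset \<sigma> \<subseteq> {t. inB (Suc k) n ?Z t}} (mle (tle le))" by (rule good_mset[OF gB])
    have mS: "m i \<in> ?S" for i using m(1) unfolding bad_seq_def by blast
    define \<sigma> where "\<sigma> i = (SOME \<sigma>. m i = Node k \<sigma> \<and> (\<forall>c. c \<in># \<sigma> \<longrightarrow> inB k (Suc n) Y c))" for i
    have m\<sigma>: "m i = Node k (\<sigma> i) \<and> (\<forall>c. c \<in># \<sigma> i \<longrightarrow> inB k (Suc n) Y c)" for i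
    proof -
      have "\<exists>\<sigma>. m i = Node k \<sigma> \<and> (\<forall>c. c \<in># \<sigma> \<longrightarrow> inB k (Suc n) Y c)" using mS[of i] unfolding Sk_def by simp
      then show ?thesis unfolding \<sigma>_def by (rule someI_ex)
    qed
    have \<sigma>M: "\<sigma> i \<in> {\<sigma>. set_mset \<sigma> \<subseteq> {t. inB (Suc k) n ?Z t}}" for i
    proof -
      have "inB (Suc k) n ?Z c" if c: "c \<in># \<sigma> i" for c
      proof -
        have "inB k (Suc n) Y c" using m\<sigma>[of i] c by blast
        then have h: "inB (Suc k) n (Y \<union> {z \<in> ?S. z = c \<or> below k z c}) c" by (rule decomp)
        have "Y \<union> {z \<in> ?S. z = c \<or> below k z c} \<subseteq> ?Z"
        proof
          fix z assume z: "z \<in> Y \<union> {z \<in> ?S. z = c \<or> below k z c}"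
          show "z \<in> ?Z"
          proof (cases "z \<in> Y")
            case False
            then have zS: "z \<in> ?S" and zc: "z = c \<or> below k z c" using z by auto
            have "below k z (Node k (\<sigma> i))" using zc c by (auto intro: below.intros)
            then have "below k z (m i)" using m\<sigma>[of i] by simp
            then show ?thesis using zS by blast
          qed simp
        qed
        then show ?thesis by (rule inB_mono[OF h])
      qed
      then show ?thesis by auto
    qed
    from wgoodD[OF gM, where f=\<sigma>, OF \<sigma>M] obtain i j where
      ij: "i < j" "mle (tle le) (\<sigma> i) (\<sigma> j)" by (elim exE conjE)
    have "tle le (Node k (\<sigma> i)) (Node k (\<sigma> j))" using ij(2) by (rule tle.node_node)
    then have "tle le (m i) (m j)" using m\<sigma>[of i] m\<sigma>[of j] by simp
    then show False using m(1) ij(1) unfolding bad_seq_def by blast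
  qed
  have "{t. inB k (Suc n) Y t} \<subseteq> {t. inB (Suc k) n (Y \<union> ?S) t}"
  proof
    fix t assume "t \<in> {t. inB k (Suc n) Y t}"
    then have h: "inB (Suc k) n (Y \<union> {z \<in> ?S. z = t \<or> below k z t}) t" using decomp by blast
    have "Y \<union> {z \<in> ?S. z = t \<or> below k z t} \<subseteq> Y \<union> ?S" by blast
    then show "t \<in> {t. inB (Suc k) n (Y \<union> ?S) t}" using inB_mono[OF h] by simp
  qed
  moreover have "wgood {t. inB (Suc k) n (Y \<union> ?S) t} (tle le)"
    by (rule Suc.IH[OF good_union[OF Suc.prems goodS]])
  ultimately show ?case using good_subset by blast
qed

lemma tle_leaf_right: "tle le a (Leaf y) \<Longrightarrow> \<exists>x. a = Leaf x \<and> le x y"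
  by (erule tle.cases) auto

lemma tle_node_left: "tle le (Node i \<sigma>) b \<Longrightarrow> \<exists>j \<tau>. b = Node j \<tau> \<and> i \<le> j"
  by (erule tle.cases) auto

lemma tle_nn_cases:
  "tle le (Node i \<sigma>) (Node j \<tau>) \<Longrightarrow> (i = j \<and> mle (tle le) \<sigma> \<tau>) \<or> (\<exists>t. t \<in># \<tau> \<and> tle le (Node i \<sigma>) t)"
  by (erule tle.cases) auto

lemma in_T_child: "in_T n A (Node i \<sigma>) \<Longrightarrow> c \<in># \<sigma> \<Longrightarrow> in_T n A c"
  by (erule in_T.cases) auto

lemma in_T_leaf: "in_T n A (Leaf x) \<Longrightarrow> x \<in> A"
  by (erule in_T.cases) auto

lemma tle_refl: "in_T n A t \<Longrightarrow> po_on A le \<Longrightarrow> tle le t t"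
proof (induction rule: in_T.induct)
  case (leaf x) then show ?case unfolding po_on_def by (auto intro: tle.leaf_leaf)
next
  case (node i \<sigma>)
  have "mle (tle le) \<sigma> \<sigma>" by (rule mle_refl) (use node in blast)
  then show ?case by (rule tle.node_node)
qed

lemma tle_trans_aux:
  assumes "tle le b c" and po: "po_on A le"
  shows "\<forall>a. in_T n A a \<longrightarrow> in_T n A b \<longrightarrow> in_T n A c \<longrightarrow> tle le a b \<longrightarrow> tle le a c"
  using assms(1)
proof (induction rule: tle.induct)
  case (leaf_leaf x y)
  show ?case
  proof (intro allI impI)
    fix a assume H: "in_T n A a" "in_T n A (Leaf x)" "in_T n A (Leaf y)" "tle le a (Leaf x)"
    obtain w where w: "a = Leaf w" "le w x" using tle_leaf_right[OF H(4)] by blast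
    have "w \<in> A" "x \<in> A" "y \<in> A" using H(1,2,3) w(1) in_T_leaf by auto
    then have "le w y" using po w(2) leaf_leaf.hyps unfolding po_on_def by blast
    then show "tle le a (Leaf y)" using w(1) by (simp add: tle.leaf_leaf)
  qed
next
  case (leaf_node t ts x j)
  show ?case
  proof (intro allI impI)
    fix a assume H: "in_T n A a" "in_T n A (Leaf x)" "in_T n A (Node j ts)" "tle le a (Leaf x)"
    obtain w where w: "a = Leaf w" using tle_leaf_right[OF H(4)] by blast
    have "in_T n A t" using in_T_child[OF H(3) leaf_node.hyps(1)] .
    then have "tle le a t" using leaf_node.IH H by blast
    then show "tle le a (Node j ts)" using w leaf_node.hyps(1) by (simp add: tle.leaf_node)
  qed
next
  case (node_node \<sigma> \<tau> i)
  show ?case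
  proof (intro allI impI)
    fix a assume H: "in_T n A a" "in_T n A (Node i \<sigma>)" "in_T n A (Node i \<tau>)" "tle le a (Node i \<sigma>)"
    have up: "\<exists>t'. t' \<in># \<tau> \<and> tle le a t'" if t: "t \<in># \<sigma>" "tle le a t" for t
    proof -
      obtain t' where t': "t' \<in># \<tau>" "tle le t t' \<and> (\<forall>a. in_T n A a \<longrightarrow> in_T n A t \<longrightarrow> in_T n A t' \<longrightarrow> tle le a t \<longrightarrow> tle le a t')"
        using mle_elem[OF node_node.IH t(1)] by blast
      have "in_T n A t" "in_T n A t'" using in_T_child H(2,3) t(1) t'(1) by blast+
      then show ?thesis using t' t(2) H(1) by blast
    qed
    from H(4) show "tle le a (Node i \<tau>)"
    proof (cases rule: tle.cases)
      case (leaf_node t x)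
      then obtain t' where "t' \<in># \<tau>" "tle le a t'" using up by blast
      then show ?thesis using leaf_node(1) by (simp add: tle.leaf_node)
    next
      case (node_node \<rho>)
      have "mle (tle le) \<rho> \<tau>"
      proof (rule mle_trans[OF node_node(2) node_node.IH])
        fix x y z assume xyz: "x \<in># \<rho>" "y \<in># \<sigma>" "z \<in># \<tau>" "tle le x y"
          "tle le y z \<and> (\<forall>a. in_T n A a \<longrightarrow> in_T n A y \<longrightarrow> in_T n A z \<longrightarrow> tle le a y \<longrightarrow> tle le a z)"
        have "in_T n A x" using in_T_child H(1) xyz(1) node_node(1) by blast
        moreover have "in_T n A y" "in_T n A z" using in_T_child H(2,3) xyz(2,3) by blast+
        ultimately show "tle le x z" using xyz(4,5) by blast
      qed
      then show ?thesis using node_node(1) by (simp add: tle.node_node)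
    next
      case (node_up i' t \<rho>)
      then obtain t' where "t' \<in># \<tau>" "tle le a t'" using up by blast
      then show ?thesis using node_up(1,2) by (simp add: tle.node_up)
    qed
  qed
next
  case (node_up i j t ts \<sigma>)
  show ?case
  proof (intro allI impI)
    fix a assume H: "in_T n A a" "in_T n A (Node i \<sigma>)" "in_T n A (Node j ts)" "tle le a (Node i \<sigma>)"
    have "in_T n A t" using in_T_child[OF H(3) node_up.hyps(2)] .
    then have at: "tle le a t" using node_up.IH H by blast
    show "tle le a (Node j ts)"
    proof (cases a)
      case (Leaf w)
      then show ?thesis using at node_up.hyps(2) by (simp add: tle.leaf_node)
    next
      case (Node i' \<rho>)
      then have "i' \<le> i" using tle_node_left[of le i' \<rho>] H(4) by fastforce
      then have "i' \<le> j" using node_up.hyps(1) by simp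
      then show ?thesis using Node at node_up.hyps(2) by (simp add: tle.node_up)
    qed
  qed
qed

lemma tle_trans: "po_on A le \<Longrightarrow> in_T n A a \<Longrightarrow> in_T n A b \<Longrightarrow> in_T n A c \<Longrightarrow> tle le a b \<Longrightarrow> tle le b c \<Longrightarrow> tle le a c"
  using tle_trans_aux by blast

lemma rel_mset_size_le:
  "rel_mset (\<lambda>x y. f x \<le> (f y :: nat)) \<sigma> \<tau> \<Longrightarrow> size_multiset f \<sigma> \<le> size_multiset f \<tau>"
proof (induction \<sigma> arbitrary: \<tau>)
  case empty then show ?case by simp
next
  case (add x \<sigma>)
  obtain \<tau>1 y where t: "\<tau> = add_mset y \<tau>1" "f x \<le> f y" "rel_mset (\<lambda>x y. f x \<le> f y) \<sigma> \<tau>1"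
    using msed_rel_invL[OF add.prems] by blast
  then show ?case using add.IH[OF t(3)] by simp
qed

lemma mle_size:
  assumes "mle (\<lambda>x y. tle le x y \<and> size x \<le> size y) \<sigma> \<tau>"
  shows "size_multiset size \<sigma> \<le> size_multiset size \<tau>"
proof -
  obtain \<tau>' where t: "\<tau>' \<subseteq># \<tau>" "rel_mset (\<lambda>x y. tle le x y \<and> size x \<le> size y) \<sigma> \<tau>'"
    using assms unfolding mle_iff by blast
  have "rel_mset (\<lambda>x y. size x \<le> size y) \<sigma> \<tau>'"
    using t(2) by (rule multiset.rel_mono_strong) simp
  then have "size_multiset size \<sigma> \<le> size_multiset size \<tau>'" by (rule rel_mset_size_le)
  moreover obtain \<rho> where "\<tau> = \<tau>' + \<rho>" using t(1) by (metis subset_mset.le_iff_add)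
  ultimately show ?thesis by (simp add: size_multiset_union)
qed

lemma tle_size: "tle le a b \<Longrightarrow> size a \<le> size b"
proof (induction rule: tle.induct)
  case (leaf_leaf x y) then show ?case by simp
next
  case (leaf_node t ts x j) then show ?case using child_size[OF leaf_node(1), of j] by simp
next
  case (node_node \<sigma> \<tau> i) then show ?case using mle_size by simp
next
  case (node_up i j t ts \<sigma>) then show ?case using child_size[OF node_up(2), of j] by simp
qed

lemma sub_size_eq: "A \<subseteq># B \<Longrightarrow> size B \<le> size A \<Longrightarrow> A = B"
  by (metis mset_subset_size subset_mset.le_less not_less)

lemma tle_antisym:
  "po_on A le \<Longrightarrow> in_T n A a \<Longrightarrow> in_T n A b \<Longrightarrow> tle le a b \<Longrightarrow> tle le b a \<Longrightarrow> a = b"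
proof (induction a arbitrary: b rule: measure_induct_rule[of size])
  case (less a)
  show ?case
  proof (cases a)
    case (Leaf x)
    have "tle le b (Leaf x)" using less.prems(5) unfolding Leaf .
    from tle_leaf_right[OF this] obtain y where y: "b = Leaf y" "le y x" by blast
    have "tle le (Leaf x) (Leaf y)" using less.prems(4) unfolding Leaf y(1) .
    from tle_leaf_right[OF this] have xy: "le x y" by blast
    have xA: "x \<in> A" by (rule in_T_leaf[OF less.prems(2)[unfolded Leaf]])
    have yA: "y \<in> A" by (rule in_T_leaf[OF less.prems(3)[unfolded y(1)]])
    have asy: "\<forall>x\<in>A. \<forall>y\<in>A. le x y \<and> le y x \<longrightarrow> x = y" using less.prems(1) unfolding po_on_def by (elim conjE)
    have "x = y" using bspec[OF bspec[OF asy xA] yA] xy y(2) by simp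
    then show ?thesis unfolding Leaf y(1) by (rule arg_cong)
  next
    case (Node i \<sigma>)
    have "tle le (Node i \<sigma>) b" using less.prems(4) unfolding Node .
    from tle_node_left[OF this] obtain j \<tau> where b: "b = Node j \<tau>" "i \<le> j" by blast
    have "tle le (Node j \<tau>) (Node i \<sigma>)" using less.prems(5) unfolding Node b(1) .
    from tle_node_left[OF this] have "j \<le> i" by blast
    then have ij: "j = i" using b(2) by simp
    have sab: "size a \<le> size b" "size b \<le> size a" using tle_size[OF less.prems(4)] tle_size[OF less.prems(5)] by auto
    have t1: "tle le (Node i \<sigma>) (Node i \<tau>)" using less.prems(4) unfolding Node b(1) ij .
    have t2: "tle le (Node i \<tau>) (Node i \<sigma>)" using less.prems(5) unfolding Node b(1) ij .
    have m1: "mle (tle le) \<sigma> \<tau>"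
    proof -
      from tle_nn_cases[OF t1] show ?thesis
      proof
        assume "\<exists>t. t \<in># \<tau> \<and> tle le (Node i \<sigma>) t"
        then obtain t where tt: "t \<in># \<tau>" "tle le (Node i \<sigma>) t" by blast
        have "size (Node i \<sigma>) < size (Node i \<tau>)"
          using tle_size[OF tt(2)] child_size[OF tt(1), of i] by linarith
        then show ?thesis using sab unfolding Node b(1) ij by linarith
      qed simp
    qed
    have m2: "mle (tle le) \<tau> \<sigma>"
    proof -
      from tle_nn_cases[OF t2] show ?thesis
      proof
        assume "\<exists>t. t \<in># \<sigma> \<and> tle le (Node i \<tau>) t"
        then obtain t where tt: "t \<in># \<sigma>" "tle le (Node i \<tau>) t" by blast
        have "size (Node i \<tau>) < size (Node i \<sigma>)"
          using tle_size[OF tt(2)] child_size[OF tt(1), of i] by linarith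
        then show ?thesis using sab unfolding Node b(1) ij by linarith
      qed simp
    qed
    obtain \<tau>1 where t1: "\<tau>1 \<subseteq># \<tau>" "rel_mset (tle le) \<sigma> \<tau>1" using m1 unfolding mle_iff by blast
    obtain \<sigma>1 where s1: "\<sigma>1 \<subseteq># \<sigma>" "rel_mset (tle le) \<tau> \<sigma>1" using m2 unfolding mle_iff by blast
    have sz1: "size \<sigma> = size \<tau>1" by (rule rel_mset_size[OF t1(2)])
    have sz2: "size \<tau> = size \<sigma>1" by (rule rel_mset_size[OF s1(2)])
    have le1: "size \<tau>1 \<le> size \<tau>" by (rule size_mset_mono[OF t1(1)])
    have le2: "size \<sigma>1 \<le> size \<sigma>" by (rule size_mset_mono[OF s1(1)])
    have "size \<tau> \<le> size \<tau>1" using sz1 sz2 le2 by linarith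
    then have e1: "\<tau>1 = \<tau>" by (rule sub_size_eq[OF t1(1)])
    have "size \<sigma> \<le> size \<sigma>1" using sz1 sz2 le1 by linarith
    then have e2: "\<sigma>1 = \<sigma>" by (rule sub_size_eq[OF s1(1)])
    have r1: "rel_mset (tle le) \<sigma> \<tau>" using t1(2) unfolding e1 .
    have r2: "rel_mset (tle le) \<tau> \<sigma>" using s1(2) unfolding e2 .
    define X where "X = set_mset \<sigma> \<union> set_mset \<tau>"
    have inTa: "in_T n A (Node i \<sigma>)" using less.prems(2) unfolding Node .
    have inTb: "in_T n A (Node i \<tau>)" using less.prems(3) unfolding b(1) ij .
    have inX: "in_T n A x" if "x \<in> X" for x
      using that in_T_child[OF inTa] in_T_child[OF inTb] unfolding X_def by blast
    have szX: "size x < size a" if "x \<in> X" for x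
    proof -
      have "size x < size (Node i \<sigma>) \<or> size x < size (Node i \<tau>)"
        using that child_size[of x \<sigma> i] child_size[of x \<tau> i] unfolding X_def by blast
      then show ?thesis using sab unfolding Node b(1) ij by linarith
    qed
    have "\<sigma> = \<tau>"
    proof (rule rel_mset_antisym[OF r1 r2, where X=X])
      fix x y z assume xyz: "x \<in> X" "y \<in> X" "z \<in> X" "tle le x y" "tle le y z"
      show "tle le x z" by (rule tle_trans[OF less.prems(1) inX[OF xyz(1)] inX[OF xyz(2)] inX[OF xyz(3)] xyz(4) xyz(5)])
    next
      fix x y assume xy: "x \<in> X" "y \<in> X" "tle le x y" "tle le y x"
      show "x = y" using less.IH[OF szX[OF xy(1)] less.prems(1) inX[OF xy(1)] inX[OF xy(2)] xy(3) xy(4)] .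
    qed (auto simp: X_def)
    then show ?thesis unfolding Node b(1) ij by (rule arg_cong)
  qed
qed

lemma po_T:
  assumes po: "po_on A le" shows "po_on (T n A) (tle le)"
  unfolding po_on_def
proof (intro conjI ballI impI)
  fix x assume "x \<in> T n A"
  then have "in_T n A x" unfolding T_def by simp
  then show "tle le x x" using tle_refl po by blast
next
  fix x y assume "x \<in> T n A" "y \<in> T n A" "tle le x y \<and> tle le y x"
  then show "x = y" using tle_antisym[OF po] unfolding T_def by blast
next
  fix x y z assume "x \<in> T n A" "y \<in> T n A" "z \<in> T n A" "tle le x y \<and> tle le y z"
  then show "tle le x z" using tle_trans[OF po] unfolding T_def by blast
qed

lemma po_sub: "po_on S r \<Longrightarrow> S2 \<subseteq> S \<Longrightarrow> po_on S2 r"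
  unfolding po_on_def by blast

lemma T_sub: "T n A \<subseteq> {t. inB 0 n (Leaf ` A) t}"
proof
  fix t assume "t \<in> T n A"
  then have "in_T n A t" unfolding T_def by simp
  then show "t \<in> {t. inB 0 n (Leaf ` A) t}"
  proof (induction rule: in_T.induct)
    case (leaf x) then show ?case by (simp add: inB.atom)
  next
    case (node i \<sigma>) then show ?case by (auto intro: inB.node)
  qed
qed

lemma good_leaves:
  assumes "wpo_on A le" shows "wgood (Leaf ` A) (tle le)"
  unfolding wgood_def
proof (intro allI impI)
  fix f :: "nat \<Rightarrow> _" assume f: "\<forall>i. f i \<in> Leaf ` A"
  define g where "g i = (SOME x. x \<in> A \<and> f i = Leaf x)" for i
  have g: "g i \<in> A \<and> f i = Leaf (g i)" for i
  proof -
    have "\<exists>x. x \<in> A \<and> f i = Leaf x" using f by blast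
    then show ?thesis unfolding g_def by (rule someI_ex)
  qed
  have "\<forall>f :: nat \<Rightarrow> _. (\<forall>k. f k \<in> A) \<longrightarrow> (\<exists>i j. i < j \<and> le (f i) (f j))"
    using assms unfolding wpo_on_def by blast
  then obtain i j where "i < j" "le (g i) (g j)" using g by blast
  then show "\<exists>i j. i < j \<and> tle le (f i) (f j)" using g by (metis tle.leaf_leaf)
qed

lemma wpoI: "po_on S r \<Longrightarrow> wgood S r \<Longrightarrow> wpo_on S r"
  unfolding wpo_on_def wgood_def by blast

theorem corollary6p6:
  fixes A :: "'a set" and le :: "'a \<Rightarrow> 'a \<Rightarrow> bool" and n :: nat
  assumes "wpo_on A le"
  shows "wpo_on (T n A) (tle le) \<and> wpo_on (Tminus (Suc n) A) (tle le)"
proof -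
  have po: "po_on A le" using assms unfolding wpo_on_def by blast
  have gl: "wgood (Leaf ` A) (tle le)" by (rule good_leaves[OF assms])
  have g: "wgood (T m A) (tle le)" for m
    using good_subset[OF main[OF gl, of 0 m] T_sub] .
  have sub: "Tminus (Suc n) A \<subseteq> T (Suc n) A" unfolding Tminus_def by blast
  show ?thesis
  proof
    show "wpo_on (T n A) (tle le)" by (rule wpoI[OF po_T[OF po] g])
    show "wpo_on (Tminus (Suc n) A) (tle le)"
      by (rule wpoI[OF po_sub[OF po_T[OF po] sub] good_subset[OF g sub]])
  qed
qed

end
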